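(* Let $m\ge 1$. Let $f:\mathbb{R}^m\to[0,\infty)$ be a bounded continuous probability density with $f(\mathbf{0})>0$ that attains its maximum at $\mathbf{t}=\mathbf{0}$, and let $\gamma$ be a probability density on $\mathbb{R}^m$. Consider the model $$\mathbf{Z}\mid\boldsymbol{\mu}\sim f(\mathbf{z}-\boldsymbol{\mu}),\qquad \boldsymbol{\mu}\sim \pi_0\,\delta_{\mathbf 0}(\boldsymbol{\mu})+(1-\pi_0)\,\gamma(\boldsymbol{\mu}),$$ with $\pi_0\in(0,1)$, where $\delta_{\mathbf 0}$ is the point mass at $\mathbf{0}\in\mathbb{R}^m$. Define $$c=\frac{\int_{\mathbb{R}^m} f(-\mathbf{v})\gamma(\mathbf{v})\,d\mathbf{v}}{f(\mathbf{0})}\ (\le 1).$$ If $\pi_0>\frac{c}{1+c}$, then there exists a threshold $t=t(\pi_0)>0$ such that whenever $\|\mathbf{z}\|_2<t$, the marginal posterior median of every coordinate is zero: $\mathrm{Med}(\mu_i\mid \mathbf{Z}=\mathbf{z})=0$ for every $1\le i\le m$ (indeed $P(\mu_i=0\mid\mathbf Z=\mathbf z)>1/2$ for all $i$).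
   Context: $\mathrm{Med}(\mu_i\mid\mathbf z)$ denotes the median of the marginal posterior distribution of the $i$-th coordinate $\mu_i$ of $\boldsymbol\mu$ given $\mathbf Z=\mathbf z$. The posterior is the mixture assigning mass to $\{\boldsymbol\mu=\mathbf 0\}$ proportional to $\pi_0 f(\mathbf z)$ and density proportional to $(1-\pi_0)f(\mathbf z-\boldsymbol\mu)\gamma(\boldsymbol\mu)$ on the rest. *)

theory Defs
  imports "HOL-Analysis.Analysis"
begin

text \<open>Posterior probability of a Borel set A of mu-values given Z = z, in the model
  Z | mu ~ f(z - mu), mu ~ pi0 delta_0 + (1 - pi0) gamma.\<close>
definition post_prob ::
  "real \<Rightarrow> (real^'m \<Rightarrow> real) \<Rightarrow> (real^'m \<Rightarrow> real) \<Rightarrow> real^'m \<Rightarrow> (real^'m) set \<Rightarrow> real" where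
  "post_prob pi0 f g z A =
     (pi0 * f z * indicator A 0 + (1 - pi0) * (\<integral>v\<in>A. f (z - v) * g v \<partial>lborel)) /
     (pi0 * f z + (1 - pi0) * (\<integral>v. f (z - v) * g v \<partial>lborel))"

definition is_post_median ::
  "real \<Rightarrow> (real^'m \<Rightarrow> real) \<Rightarrow> (real^'m \<Rightarrow> real) \<Rightarrow> real^'m \<Rightarrow> 'm \<Rightarrow> real \<Rightarrow> bool" where
  "is_post_median pi0 f g z i a \<longleftrightarrow>
     post_prob pi0 f g z {v. v $ i \<le> a} \<ge> 1/2 \<and> post_prob pi0 f g z {v. v $ i \<ge> a} \<ge> 1/2"

end

theory Submission
  imports Defs
begin

lemma setint_bounds:
  fixes h :: "real^'m \<Rightarrow> real"
  assumes "integrable lborel h" "\<And>v. h v \<ge> 0"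
  shows "0 \<le> (\<integral>v\<in>A. h v \<partial>lborel)" "(\<integral>v\<in>A. h v \<partial>lborel) \<le> (\<integral>v. h v \<partial>lborel)"
proof -
  show "0 \<le> (\<integral>v\<in>A. h v \<partial>lborel)"
    unfolding set_lebesgue_integral_def using assms(2)
    by (intro Bochner_Integration.integral_nonneg) (simp add: indicator_def)
  show "(\<integral>v\<in>A. h v \<partial>lborel) \<le> (\<integral>v. h v \<partial>lborel)"
    unfolding set_lebesgue_integral_def using assms
    by (intro integral_mono') (auto simp: indicator_def)
qed

lemma post_bounds:
  fixes f g :: "real^'m \<Rightarrow> real" and z :: "real^'m"
  assumes int: "integrable lborel (\<lambda>v. f (z - v) * g v)"
    and nn: "\<And>v. f (z - v) * g v \<ge> 0"
    and big: "pi0 * f z > (1 - pi0) * (\<integral>v. f (z - v) * g v \<partial>lborel)"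
    and p: "0 < pi0" "pi0 < 1"
  shows "0 \<in> A \<Longrightarrow> post_prob pi0 f g z A > 1/2"
    and "0 \<notin> A \<Longrightarrow> post_prob pi0 f g z A < 1/2"
proof -
  define J where "J = (\<integral>v. f (z - v) * g v \<partial>lborel)"
  define S where "S = (\<integral>v\<in>A. f (z - v) * g v \<partial>lborel)"
  have S0: "0 \<le> S" and SJ: "S \<le> J" unfolding S_def J_def using setint_bounds[OF int nn] by auto
  have K0: "0 \<le> (1 - pi0) * J" using S0 SJ p by simp
  have big': "pi0 * f z > (1 - pi0) * J" using big J_def by simp
  have D: "pi0 * f z + (1 - pi0) * J > 0" using K0 big' by linarith
  have PS: "post_prob pi0 f g z A = (pi0 * f z * indicator A 0 + (1 - pi0) * S) / (pi0 * f z + (1 - pi0) * J)"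
    unfolding post_prob_def S_def J_def by simp
  have S1: "(1 - pi0) * S \<ge> 0" "(1 - pi0) * S \<le> (1 - pi0) * J" using S0 SJ p by (auto intro: mult_left_mono)
  show "0 \<in> A \<Longrightarrow> post_prob pi0 f g z A > 1/2"
    unfolding PS using D S1 big' by (simp add: field_simps)
  show "0 \<notin> A \<Longrightarrow> post_prob pi0 f g z A < 1/2"
    unfolding PS using D S1 big' by (simp add: field_simps)
qed

theorem theorem1:
  fixes f g :: "real^'m \<Rightarrow> real" and pi0 :: real
  assumes f_cont: "continuous_on UNIV f"
    and f_nonneg: "\<And>x. f x \<ge> 0"
    and f_bdd: "bounded (range f)"
    and f_int: "integrable lborel f" and f_total: "(\<integral>x. f x \<partial>lborel) = 1"
    and f0_pos: "f 0 > 0"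
    and f_max: "\<And>t. f t \<le> f 0"
    and g_meas: "g \<in> borel_measurable lborel"
    and g_nonneg: "\<And>x. g x \<ge> 0"
    and g_int: "integrable lborel g" and g_total: "(\<integral>x. g x \<partial>lborel) = 1"
    and pi0_pos: "0 < pi0" and pi0_lt1: "pi0 < 1"
    and pi0_big: "pi0 > (let c = (\<integral>v. f (- v) * g v \<partial>lborel) / f 0 in c / (1 + c))"
  shows "\<exists>t>0. \<forall>z :: real^'m. norm z < t \<longrightarrow>
           (\<forall>i. post_prob pi0 f g z {v. v $ i = 0} > 1/2 \<and>
                {a. is_post_median pi0 f g z i a} = {0})"
proof -
  define J where "J z = (\<integral>v. f (z - v) * g v \<partial>lborel)" for z :: "real^'m"
  have fmeas: "f \<in> borel_measurable borel" using f_cont by (simp add: borel_measurable_continuous_onI)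
  have meas: "(\<lambda>v. f (z - v) * g v) \<in> borel_measurable lborel" for z
    using fmeas g_meas by measurable
  have intz: "integrable lborel (\<lambda>v. f (z - v) * g v)" for z
  proof (rule Bochner_Integration.integrable_bound[where f="\<lambda>v. f 0 * g v"])
    show "integrable lborel (\<lambda>v. f 0 * g v)" using g_int by simp
    show "(\<lambda>v. f (z - v) * g v) \<in> borel_measurable lborel" by (rule meas)
    show "AE x in lborel. norm (f (z - x) * g x) \<le> norm (f 0 * g x)"
      using f_nonneg g_nonneg f_max by (auto simp: abs_mult intro!: mult_right_mono)
  qed
  have nnz: "f (z - v) * g v \<ge> 0" for z v using f_nonneg g_nonneg by simp
  have contJ: "isCont J 0"
  proof (rule continuous_at_sequentiallyI)
    fix X :: "nat \<Rightarrow> real^'m" assume X: "X \<longlonglongrightarrow> 0"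
    show "(\<lambda>n. J (X n)) \<longlonglongrightarrow> J 0"
      unfolding J_def
    proof (rule integral_dominated_convergence[where w="\<lambda>v. f 0 * g v"])
      show "(\<lambda>v. f (0 - v) * g v) \<in> borel_measurable lborel" by (rule meas)
      show "\<And>i. (\<lambda>v. f (X i - v) * g v) \<in> borel_measurable lborel" by (rule meas)
      show "integrable lborel (\<lambda>v. f 0 * g v)" using g_int by simp
      show "AE x in lborel. (\<lambda>i. f (X i - x) * g x) \<longlonglongrightarrow> f (0 - x) * g x"
      proof (rule AE_I2)
        fix x
        have "(\<lambda>i. X i - x) \<longlonglongrightarrow> 0 - x" using X by (intro tendsto_intros)
        moreover have "isCont f (0 - x)" using f_cont by (simp add: continuous_on_eq_continuous_at)
        ultimately have "(\<lambda>i. f (X i - x)) \<longlonglongrightarrow> f (0 - x)"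
          using isCont_tendsto_compose by blast
        then show "(\<lambda>i. f (X i - x) * g x) \<longlonglongrightarrow> f (0 - x) * g x" by (intro tendsto_intros)
      qed
      show "\<And>i. AE x in lborel. norm (f (X i - x) * g x) \<le> f 0 * g x"
        using f_nonneg g_nonneg f_max by (auto simp: abs_mult intro!: mult_right_mono)
    qed
  qed
  define H where "H z = pi0 * f z - (1 - pi0) * J z" for z
  have contH: "isCont H 0" unfolding H_def
    using contJ f_cont by (intro continuous_intros) (simp_all add: continuous_on_eq_continuous_at)
  have H0: "H 0 > 0"
  proof -
    define c where "c = J 0 / f 0"
    have J0: "J 0 = (\<integral>v. f (- v) * g v \<partial>lborel)" unfolding J_def by simp
    have c0: "c \<ge> 0" unfolding c_def J_def using nnz f0_pos
      by (intro divide_nonneg_pos Bochner_Integration.integral_nonneg) (auto simp: nnz[of 0, simplified])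
    have "pi0 > c / (1 + c)" using pi0_big unfolding c_def J0 Let_def by simp
    then have "pi0 * (1 + c) > c" using c0 by (simp add: field_simps)
    then have "pi0 > (1 - pi0) * c" by (simp add: algebra_simps)
    then have "pi0 * f 0 > (1 - pi0) * c * f 0" using f0_pos by simp
    moreover have "c * f 0 = J 0" unfolding c_def using f0_pos by simp
    then have "(1 - pi0) * c * f 0 = (1 - pi0) * J 0" by (simp add: mult.assoc)
    ultimately show ?thesis unfolding H_def by linarith
  qed
  obtain t where t: "t > 0" "\<And>z. dist z 0 < t \<Longrightarrow> H z > 0"
  proof -
    obtain d where d: "d > 0" "\<And>x. dist x 0 < d \<Longrightarrow> dist (H x) (H 0) < H 0"
      using contH H0 unfolding continuous_at_eps_delta by blast
    have "H x > 0" if "dist x 0 < d" for x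
      using d(2)[OF that] by (simp add: dist_real_def abs_less_iff)
    then show ?thesis using that d(1) by blast
  qed
  show ?thesis
  proof (intro exI[of _ t] conjI allI impI)
    show "t > 0" by (rule t)
    fix z :: "real^'m" and i assume nz: "norm z < t"
    have big: "pi0 * f z > (1 - pi0) * (\<integral>v. f (z - v) * g v \<partial>lborel)"
      using t(2)[of z] nz unfolding H_def J_def by (simp add: dist_norm)
    note pb = post_bounds[OF intz nnz big pi0_pos pi0_lt1]
    show "post_prob pi0 f g z {v. v $ i = 0} > 1/2" by (rule pb(1)) simp
    show "{a. is_post_median pi0 f g z i a} = {0}"
    proof (intro set_eqI iffI)
      fix a assume "a \<in> {a. is_post_median pi0 f g z i a}"
      then have m: "post_prob pi0 f g z {v. v $ i \<le> a} \<ge> 1/2" "post_prob pi0 f g z {v. v $ i \<ge> a} \<ge> 1/2"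
        unfolding is_post_median_def by auto
      have "\<not> a > 0" using m(2) pb(2)[of "{v. v $ i \<ge> a}"] by auto
      moreover have "\<not> a < 0" using m(1) pb(2)[of "{v. v $ i \<le> a}"] by auto
      ultimately show "a \<in> {0}" by simp
    next
      fix a assume "a \<in> ({0}::real set)"
      then show "a \<in> {a. is_post_median pi0 f g z i a}"
        unfolding is_post_median_def using pb(1)[of "{v. v $ i \<le> 0}"] pb(1)[of "{v. v $ i \<ge> 0}"]
        by auto
    qed
  qed
qed

end
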